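(* Let $X_1,\dots,X_n$ be real numbers (or random variables), $\epsilon\in(0,1/2)$, and let $X_1^\epsilon,\dots,X_n^\epsilon$ satisfy $\#\{i\in[n]:X_i^\epsilon\neq X_i\}\leq\epsilon n$. Let $k_1,k_2\in\mathbb{N}$ satisfy $\min\{k_1,k_2\}\geq\lfloor\epsilon n\rfloor$ and $k_1+k_2<n$. Then \[\overline{X}_{n,k_1-\lfloor\epsilon n\rfloor,\,k_2+\lfloor\epsilon n\rfloor}\leq\overline{X^\epsilon}_{n,k_1,k_2}\leq\overline{X}_{n,k_1+\lfloor\epsilon n\rfloor,\,k_2-\lfloor\epsilon n\rfloor}.\]
   Context: For integers $k_1,k_2\geq0$ with $k_1+k_2<n$ and order statistics $X_{(1)}\le\dots\le X_{(n)}$, the $(k_1,k_2)$-trimmed mean is $\overline{X}_{n,k_1,k_2}:=\frac{1}{n-k_1-k_2}\sum_{i=k_1+1}^{n-k_2}X_{(i)}$; $\overline{X^\epsilon}_{n,k_1,k_2}$ is defined in the same way from the order statistics $X^\epsilon_{(1)}\le\dots\le X^\epsilon_{(n)}$ of $X^\epsilon_1,\dots,X^\epsilon_n$. *)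

theory Defs
  imports Complex_Main
begin

text \<open>Order statistics of X_1..X_n (indexed here by 0..n-1): the i-th order statistic
  X_(i) (1-based) is the (i-1)-th entry of the sorted list.\<close>
definition order_stat :: "nat \<Rightarrow> (nat \<Rightarrow> real) \<Rightarrow> nat \<Rightarrow> real" where
  "order_stat n X i = sort (map X [0..<n]) ! (i - 1)"

definition trimmed_mean :: "nat \<Rightarrow> (nat \<Rightarrow> real) \<Rightarrow> nat \<Rightarrow> nat \<Rightarrow> real" where
  "trimmed_mean n X k1 k2 =
     (\<Sum>i = k1 + 1..n - k2. order_stat n X i) / real (n - k1 - k2)"

end

theory Submission
  imports Defs
begin


lemma count_le:
  fixes s :: "real list"
  assumes "sorted s" "j < length s"
  shows "j + 1 \<le> length (filter (\<lambda>x. x \<le> s!j) s)"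
proof -
  have "filter (\<lambda>x. x \<le> s!j) (take (j+1) s) = take (j+1) s"
  proof (rule filter_True, intro ballI)
    fix x assume "x \<in> set (take (j+1) s)"
    then obtain i where "i < length (take (j+1) s)" "x = take (j+1) s ! i" by (metis in_set_conv_nth)
    then show "x \<le> s!j" using assms by (auto intro!: sorted_nth_mono)
  qed
  hence "length (filter (\<lambda>x. x \<le> s!j) (take (j+1) s)) = j+1" using assms by simp
  moreover have "filter (\<lambda>x. x \<le> s!j) s = filter (\<lambda>x. x \<le> s!j) (take (j+1) s) @ filter (\<lambda>x. x \<le> s!j) (drop (j+1) s)"
    by (metis append_take_drop_id filter_append)
  ultimately show ?thesis by simp
qed

lemma count_lt:
  fixes s :: "real list"
  assumes "sorted s" "j < length s"
  shows "length (filter (\<lambda>x. x < s!j) s) \<le> j"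
proof -
  have "filter (\<lambda>x. x < s!j) (drop j s) = []"
  proof (rule filter_False, intro ballI)
    fix x assume "x \<in> set (drop j s)"
    then obtain i where "i < length (drop j s)" "x = drop j s ! i" by (metis in_set_conv_nth)
    then show "\<not> x < s!j" using assms sorted_nth_mono[of s j "j+i"] by (simp, linarith)
  qed
  moreover have "filter (\<lambda>x. x < s!j) s = filter (\<lambda>x. x < s!j) (take j s) @ filter (\<lambda>x. x < s!j) (drop j s)"
    by (metis append_take_drop_id filter_append)
  moreover have "length (filter (\<lambda>x. x < s!j) (take j s)) \<le> j"
    by (metis length_filter_le length_take min.bounded_iff order_refl order_trans)
  ultimately show ?thesis by simp
qed

lemma count_card:
  "length (filter P (sort (map X [0..<n]))) = card {k \<in> {0..<n}. P (X k)}"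
proof -
  have "length (filter P (sort (map X [0..<n]))) = length (filter P (map X [0..<n]))"
    by (simp add: filter_sort)
  also have "\<dots> = length (filter (P \<circ> X) [0..<n])" by (simp add: filter_map)
  also have "\<dots> = card (set (filter (P \<circ> X) [0..<n]))" by (rule distinct_card[symmetric]) simp
  also have "set (filter (P \<circ> X) [0..<n]) = {k \<in> {0..<n}. P (X k)}" by auto
  finally show ?thesis .
qed

lemma interlace:
  fixes X Y :: "nat \<Rightarrow> real"
  assumes D: "card {i \<in> {0..<n}. Y i \<noteq> X i} \<le> m" and j: "m \<le> j" "j < n"
  shows "sort (map X [0..<n]) ! (j - m) \<le> sort (map Y [0..<n]) ! j"
proof (rule ccontr)
  let ?sX = "sort (map X [0..<n])" and ?sY = "sort (map Y [0..<n])"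
  assume "\<not> ?thesis"
  hence lt: "?sY ! j < ?sX ! (j - m)" by simp
  define A where "A = {k \<in> {0..<n}. Y k \<le> ?sY ! j}"
  define DD where "DD = {i \<in> {0..<n}. Y i \<noteq> X i}"
  have cA: "j + 1 \<le> card A" using count_le[of ?sY j] count_card[of "\<lambda>x. x \<le> ?sY ! j" Y n] j
    unfolding A_def by simp
  have cB: "card {k \<in> {0..<n}. X k < ?sX ! (j - m)} \<le> j - m"
    using count_lt[of ?sX "j-m"] count_card[of "\<lambda>x. x < ?sX ! (j-m)" X n] j by simp
  have sub: "A - DD \<subseteq> {k \<in> {0..<n}. X k < ?sX ! (j - m)}"
    using lt unfolding A_def DD_def by auto
  have "card A - card DD \<le> card (A - DD)" by (rule diff_card_le_card_Diff) (simp add: DD_def)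
  also have "\<dots> \<le> j - m" using card_mono[OF _ sub] cB by simp 
  finally show False using cA D j unfolding DD_def by linarith
qed


theorem proposition3p6:
  fixes X Xeps :: "nat \<Rightarrow> real" and n k1 k2 :: nat and \<epsilon> :: real
  assumes "0 < \<epsilon>" and "\<epsilon> < 1/2"
    and "real (card {i \<in> {0..<n}. Xeps i \<noteq> X i}) \<le> \<epsilon> * real n"
    and "min k1 k2 \<ge> nat \<lfloor>\<epsilon> * real n\<rfloor>"
    and "k1 + k2 < n"
  shows "trimmed_mean n X (k1 - nat \<lfloor>\<epsilon> * real n\<rfloor>) (k2 + nat \<lfloor>\<epsilon> * real n\<rfloor>)
           \<le> trimmed_mean n Xeps k1 k2
       \<and> trimmed_mean n Xeps k1 k2
           \<le> trimmed_mean n X (k1 + nat \<lfloor>\<epsilon> * real n\<rfloor>) (k2 - nat \<lfloor>\<epsilon> * real n\<rfloor>)"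
proof -
  define m where "m = nat \<lfloor>\<epsilon> * real n\<rfloor>"
  let ?sX = "sort (map X [0..<n])" and ?sY = "sort (map Xeps [0..<n])"
  have "int (card {i \<in> {0..<n}. Xeps i \<noteq> X i}) \<le> \<lfloor>\<epsilon> * real n\<rfloor>"
    using assms(3) by (simp add: le_floor_iff)
  hence D: "card {i \<in> {0..<n}. Xeps i \<noteq> X i} \<le> m" unfolding m_def by linarith
  have D': "card {i \<in> {0..<n}. X i \<noteq> Xeps i} \<le> m" proof -
    have "{i \<in> {0..<n}. X i \<noteq> Xeps i} = {i \<in> {0..<n}. Xeps i \<noteq> X i}" by auto
    thus ?thesis using D by simp
  qed
  have k: "m \<le> k1" "m \<le> k2" using assms(4) unfolding m_def by auto
  have den1: "n - (k1 - m) - (k2 + m) = n - k1 - k2" using k by simp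
  have den2: "n - (k1 + m) - (k2 - m) = n - k1 - k2" using k by simp
  have S1: "(\<Sum>i = k1 - m + 1..n - (k2 + m). order_stat n X i) \<le> (\<Sum>i = k1 + 1..n - k2. order_stat n Xeps i)"
  proof -
    have "(\<Sum>i = k1 - m + 1..n - (k2 + m). order_stat n X i) = (\<Sum>i = (k1 - m + 1) + m..(n - (k2 + m)) + m. order_stat n X (i - m))"
      by (subst sum.shift_bounds_cl_nat_ivl) simp
    also have "\<dots> = (\<Sum>i = k1 + 1..n - k2. order_stat n X (i - m))"
      using k assms(5) by (intro sum.cong) auto
    also have "\<dots> \<le> (\<Sum>i = k1 + 1..n - k2. order_stat n Xeps i)"
    proof (rule sum_mono)
      fix i assume i: "i \<in> {k1 + 1..n - k2}"
      have "?sX ! ((i - 1) - m) \<le> ?sY ! (i - 1)"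
        using interlace[OF D, of "i - 1"] i k assms(5) by auto
      moreover have "i - m - 1 = i - 1 - m" by simp
      ultimately show "order_stat n X (i - m) \<le> order_stat n Xeps i" unfolding order_stat_def by simp
    qed
    finally show ?thesis .
  qed
  have S2: "(\<Sum>i = k1 + 1..n - k2. order_stat n Xeps i) \<le> (\<Sum>i = k1 + m + 1..n - (k2 - m). order_stat n X i)"
  proof -
    have "(\<Sum>i = k1 + m + 1..n - (k2 - m). order_stat n X i) = (\<Sum>i = (k1 + 1) + m..(n - k2) + m. order_stat n X i)"
      using k assms(5) by (intro sum.cong) auto
    also have "\<dots> = (\<Sum>i = k1 + 1..n - k2. order_stat n X (i + m))"
      by (subst sum.shift_bounds_cl_nat_ivl) simp
    finally have eq: "(\<Sum>i = k1 + m + 1..n - (k2 - m). order_stat n X i) = (\<Sum>i = k1 + 1..n - k2. order_stat n X (i + m))" .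
    have "(\<Sum>i = k1 + 1..n - k2. order_stat n Xeps i) \<le> (\<Sum>i = k1 + 1..n - k2. order_stat n X (i + m))"
    proof (rule sum_mono)
      fix i assume i: "i \<in> {k1 + 1..n - k2}"
      have "?sY ! ((i - 1 + m) - m) \<le> ?sX ! (i - 1 + m)"
        using interlace[OF D', of "i - 1 + m"] i k assms(5) by auto
      moreover have "i + m - 1 = i - 1 + m" using i by auto
      ultimately show "order_stat n Xeps i \<le> order_stat n X (i + m)" unfolding order_stat_def by simp
    qed
    thus ?thesis using eq by simp
  qed
  show ?thesis
    unfolding trimmed_mean_def m_def[symmetric] den1 den2
    using S1 S2 by (simp add: divide_right_mono)
qed

end
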